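(* Let $V$ be a finite set, let $d\ge 1$, let $R=(\le_1,\ldots,\le_d)$ be a $d$-representation on $V$, let $R'=(\le_1,\ldots,\le_{d-1})$, and let $\psi:\Sigma(R)\setminus\Sigma(R')\to V$ be defined by $\psi(F)=\min_{\le_d}\{x\in V : x<_i\max_{\le_i}F \ \forall i\in\{1,\ldots,d-1\}\}$. Let $A=\{F\in\Sigma(R)\setminus\Sigma(R') : \psi(F)\notin F\}$ and $B=\{F\in\Sigma(R)\setminus\Sigma(R') : \psi(F)\in F\}$. Then: (1) for every $F\in A$: $F\cup\{\psi(F)\}\in B$, $\psi(F\cup\{\psi(F)\})=\psi(F)$, and $f<_d\psi(F)$ for every $f\in F$ (i.e. $\max_{\le_d}F<_d\psi(F)$ when $F\neq\emptyset$); (2) for every $F\in B$: $F\setminus\{\psi(F)\}\in A$ and $\psi(F\setminus\{\psi(F)\})=\psi(F)$.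
   Context: A $k$-representation on $V$ is a family of $k$ linear orders on $V$. For a linear order $\le$ on $V$, $x\in V$ and $F\subseteq V$, $x$ dominates $F$ in $\le$ if $f\le x$ for all $f\in F$; $x$ dominates $F$ in a representation if it dominates $F$ in at least one of its orders. For a representation $S$ on $V$, the supremum section $\Sigma(S)$ is the set of subsets $F\subseteq V$ such that every $v\in V$ dominates $F$ in $S$. When $d=1$, $R'$ has no orders and the same definition applies. The set over which the minimum defining $\psi$ is taken is nonempty for every $F\in\Sigma(R)\setminus\Sigma(R')$. $<_i$ denotes the strict order associated with $\le_i$. *)

theory Defs
  imports Main
begin

text \<open>A linear order on V is a relation r with linear_order_on V r (from Main).
  A k-representation is a list of k such relations.\<close>

definition dominates_in :: "('a \<times> 'a) set \<Rightarrow> 'a \<Rightarrow> 'a set \<Rightarrow> bool" where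
  "dominates_in r x F \<longleftrightarrow> (\<forall>f\<in>F. (f, x) \<in> r)"

definition dominates_rep :: "('a \<times> 'a) set list \<Rightarrow> 'a \<Rightarrow> 'a set \<Rightarrow> bool" where
  "dominates_rep S x F \<longleftrightarrow> (\<exists>r\<in>set S. dominates_in r x F)"

definition supremum_section :: "'a set \<Rightarrow> ('a \<times> 'a) set list \<Rightarrow> 'a set set" where
  "supremum_section V S = {F. F \<subseteq> V \<and> (\<forall>v\<in>V. dominates_rep S v F)}"

definition strict_in :: "('a \<times> 'a) set \<Rightarrow> 'a \<Rightarrow> 'a \<Rightarrow> bool" where
  "strict_in r x y \<longleftrightarrow> (x, y) \<in> r \<and> x \<noteq> y"

definition max_in :: "('a \<times> 'a) set \<Rightarrow> 'a set \<Rightarrow> 'a" where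
  "max_in r F = (THE x. x \<in> F \<and> (\<forall>f\<in>F. (f, x) \<in> r))"

definition min_in :: "('a \<times> 'a) set \<Rightarrow> 'a set \<Rightarrow> 'a" where
  "min_in r F = (THE x. x \<in> F \<and> (\<forall>f\<in>F. (x, f) \<in> r))"

text \<open>psi for R = Rs (d = length Rs orders, indices 0..d-1; the last one is the d-th order).\<close>
definition psi :: "'a set \<Rightarrow> ('a \<times> 'a) set list \<Rightarrow> 'a set \<Rightarrow> 'a" where
  "psi V Rs F = min_in (Rs ! (length Rs - 1))
     {x \<in> V. \<forall>i < length Rs - 1. strict_in (Rs ! i) x (max_in (Rs ! i) F)}"

end

theory Submission
  imports Defs
begin


lemma lin_refl: "linear_order_on V r \<Longrightarrow> x \<in> V \<Longrightarrow> (x,x) \<in> r"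
  by (auto simp: linear_order_on_def partial_order_on_def preorder_on_def refl_on_def)
lemma lin_sub: "linear_order_on V r \<Longrightarrow> (x,y) \<in> r \<Longrightarrow> x \<in> V \<and> y \<in> V"
  by (auto simp: linear_order_on_def partial_order_on_def preorder_on_def refl_on_def)
lemma lin_trans: "linear_order_on V r \<Longrightarrow> (x,y) \<in> r \<Longrightarrow> (y,z) \<in> r \<Longrightarrow> (x,z) \<in> r"
  unfolding linear_order_on_def partial_order_on_def preorder_on_def trans_def by blast
lemma lin_antisym: "linear_order_on V r \<Longrightarrow> (x,y) \<in> r \<Longrightarrow> (y,x) \<in> r \<Longrightarrow> x = y"
  unfolding linear_order_on_def partial_order_on_def antisym_def by blast
lemma lin_total: "linear_order_on V r \<Longrightarrow> x \<in> V \<Longrightarrow> y \<in> V \<Longrightarrow> (x,y) \<notin> r \<Longrightarrow> (y,x) \<in> r \<and> y \<noteq> x"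
proof -
  assume l: "linear_order_on V r" and xy: "x \<in> V" "y \<in> V" "(x,y) \<notin> r"
  have "x \<noteq> y" using lin_refl[OF l xy(1)] xy(3) by auto
  moreover have "total_on V r" using l by (simp add: linear_order_on_def)
  ultimately show ?thesis using xy unfolding total_on_def by blast
qed

lemma max_exists: "finite F \<Longrightarrow> F \<noteq> {} \<Longrightarrow> linear_order_on V r \<Longrightarrow> F \<subseteq> V \<Longrightarrow>
   \<exists>x. x \<in> F \<and> (\<forall>f\<in>F. (f, x) \<in> r)"
proof (induction F rule: finite_ne_induct)
  case (singleton x) thus ?case using lin_refl by fastforce
next
  case (insert x F)
  have l: "linear_order_on V r" and xV: "x \<in> V" and FV: "F \<subseteq> V" using insert.prems by auto
  obtain m where m: "m \<in> F" "\<forall>f\<in>F. (f,m)\<in>r" using insert.IH[OF l FV] by auto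
  have mV: "m \<in> V" using m FV by auto
  show ?case
  proof (cases "(m,x) \<in> r")
    case True
    have "\<forall>f\<in>insert x F. (f,x)\<in>r" using True m lin_trans[OF l] lin_refl[OF l xV] by blast
    thus ?thesis by blast
  next
    case False
    have "(x,m) \<in> r" using lin_total[OF l mV xV False] by simp
    hence "\<forall>f\<in>insert x F. (f,m)\<in>r" using m by blast
    thus ?thesis using m(1) by blast
  qed
qed

lemma min_exists: "finite F \<Longrightarrow> F \<noteq> {} \<Longrightarrow> linear_order_on V r \<Longrightarrow> F \<subseteq> V \<Longrightarrow>
   \<exists>x. x \<in> F \<and> (\<forall>f\<in>F. (x, f) \<in> r)"
proof (induction F rule: finite_ne_induct)
  case (singleton x) thus ?case using lin_refl by fastforce
next
  case (insert x F)
  have l: "linear_order_on V r" and xV: "x \<in> V" and FV: "F \<subseteq> V" using insert.prems by auto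
  obtain m where m: "m \<in> F" "\<forall>f\<in>F. (m,f)\<in>r" using insert.IH[OF l FV] by auto
  have mV: "m \<in> V" using m FV by auto
  show ?case
  proof (cases "(x,m) \<in> r")
    case True
    have "\<forall>f\<in>insert x F. (x,f)\<in>r" using True m lin_trans[OF l] lin_refl[OF l xV] by blast
    thus ?thesis by blast
  next
    case False
    have "(m,x) \<in> r" using lin_total[OF l xV mV False] by simp
    hence "\<forall>f\<in>insert x F. (m,f)\<in>r" using m by blast
    thus ?thesis using m(1) by blast
  qed
qed

lemma max_eq: "linear_order_on V r \<Longrightarrow> x \<in> F \<Longrightarrow> \<forall>f\<in>F. (f, x) \<in> r \<Longrightarrow> max_in r F = x"
  unfolding max_in_def by (rule the_equality) (auto intro: lin_antisym)
lemma min_eq: "linear_order_on V r \<Longrightarrow> x \<in> F \<Longrightarrow> \<forall>f\<in>F. (x, f) \<in> r \<Longrightarrow> min_in r F = x"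
  unfolding min_in_def by (rule the_equality) (auto intro: lin_antisym)

lemma max_props: "linear_order_on V r \<Longrightarrow> finite F \<Longrightarrow> F \<noteq> {} \<Longrightarrow> F \<subseteq> V \<Longrightarrow>
   max_in r F \<in> F \<and> (\<forall>f\<in>F. (f, max_in r F) \<in> r)"
  using max_exists[of F V r] max_eq[of V r] by metis
lemma min_props: "linear_order_on V r \<Longrightarrow> finite F \<Longrightarrow> F \<noteq> {} \<Longrightarrow> F \<subseteq> V \<Longrightarrow>
   min_in r F \<in> F \<and> (\<forall>f\<in>F. (min_in r F, f) \<in> r)"
  using min_exists[of F V r] min_eq[of V r] by metis

lemma dom_take: "n \<le> length Rs \<Longrightarrow> dominates_rep (take n Rs) v F \<longleftrightarrow> (\<exists>i<n. dominates_in (Rs!i) v F)"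
  by (auto simp: dominates_rep_def set_conv_nth)

lemma dom_full: "dominates_rep Rs v F \<longleftrightarrow> (\<exists>i<length Rs. dominates_in (Rs!i) v F)"
  by (auto simp: dominates_rep_def set_conv_nth)


lemma psi_cong: "\<forall>i<length Rs - 1. max_in (Rs!i) G = max_in (Rs!i) F \<Longrightarrow> psi V Rs G = psi V Rs F"
  unfolding psi_def by simp

lemma core:
  assumes fin: "finite V" and len: "length Rs = d" and d1: "d \<ge> 1"
    and lin: "\<forall>i<d. linear_order_on V (Rs!i)"
    and FS: "F \<in> supremum_section V Rs" and FnS: "F \<notin> supremum_section V (take (d-1) Rs)"
  defines "S \<equiv> {x\<in>V. \<forall>i<d-1. strict_in (Rs!i) x (max_in (Rs!i) F)}"
  shows "F \<subseteq> V" "finite F" "d > 1 \<Longrightarrow> F \<noteq> {}"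
    "\<And>i. i < d - 1 \<Longrightarrow> max_in (Rs!i) F \<in> F \<and> (\<forall>f\<in>F. (f, max_in (Rs!i) F) \<in> Rs!i)"
    "S \<noteq> {}" "\<forall>x\<in>S. \<forall>f\<in>F. (f,x) \<in> Rs!(d-1)"
    "psi V Rs F \<in> S" "\<forall>x\<in>S. (psi V Rs F, x) \<in> Rs!(d-1)"
proof -
  show FV: "F \<subseteq> V" using FS by (simp add: supremum_section_def)
  thus finF: "finite F" using fin finite_subset by blast
  show Fne: "F \<noteq> {}" if "d > 1"
  proof
    assume "F = {}"
    have "\<forall>v\<in>V. dominates_rep (take (d-1) Rs) v F"
      using that len \<open>F = {}\<close> by (auto simp: dom_take dominates_in_def intro!: exI[of _ 0])
    thus False using FnS \<open>F = {}\<close> by (simp add: supremum_section_def)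
  qed
  show maxF: "max_in (Rs!i) F \<in> F \<and> (\<forall>f\<in>F. (f, max_in (Rs!i) F) \<in> Rs!i)" if "i < d - 1" for i
    using max_props[of V "Rs!i" F] lin that finF Fne FV by auto
  obtain v where vV: "v \<in> V" and nd: "\<not> dominates_rep (take (d-1) Rs) v F"
    using FnS FV by (auto simp: supremum_section_def)
  have "v \<in> S"
  proof -
    have "strict_in (Rs!i) v (max_in (Rs!i) F)" if i: "i < d-1" for i
    proof -
      have l: "linear_order_on V (Rs!i)" using lin i by auto
      obtain f where f: "f \<in> F" "(f,v) \<notin> Rs!i" using nd i len by (auto simp: dom_take dominates_in_def)
      have fV: "f \<in> V" using f FV by auto
      have vf: "(v,f) \<in> Rs!i" "f \<noteq> v" using lin_total[OF l fV vV f(2)] by auto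
      have fm: "(f, max_in (Rs!i) F) \<in> Rs!i" using maxF[OF i] f by auto
      have "(v, max_in (Rs!i) F) \<in> Rs!i" using lin_trans[OF l vf(1) fm] .
      moreover have "v \<noteq> max_in (Rs!i) F" using fm f(2) by auto
      ultimately show ?thesis by (simp add: strict_in_def)
    qed
    thus ?thesis using vV by (simp add: S_def)
  qed
  thus Sne: "S \<noteq> {}" by auto
  show domS: "\<forall>x\<in>S. \<forall>f\<in>F. (f,x) \<in> Rs!(d-1)"
  proof (intro ballI)
    fix x f assume x: "x \<in> S" and f: "f \<in> F"
    have xV: "x \<in> V" using x by (simp add: S_def)
    obtain i where i: "i < d" "dominates_in (Rs!i) x F"
      using FS xV len by (auto simp: supremum_section_def dom_full)
    have "i = d - 1"
    proof (rule ccontr)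
      assume "i \<noteq> d - 1"
      hence i1: "i < d - 1" using i by auto
      have l: "linear_order_on V (Rs!i)" using lin i by auto
      have "(max_in (Rs!i) F, x) \<in> Rs!i" using i(2) maxF[OF i1] by (simp add: dominates_in_def)
      moreover have "strict_in (Rs!i) x (max_in (Rs!i) F)" using x i1 by (simp add: S_def)
      ultimately show False using lin_antisym[OF l] by (auto simp: strict_in_def)
    qed
    thus "(f,x) \<in> Rs!(d-1)" using i f by (simp add: dominates_in_def)
  qed
  have lL: "linear_order_on V (Rs!(d-1))" using lin d1 by auto
  have "psi V Rs F = min_in (Rs!(d-1)) S" unfolding psi_def S_def using len by simp
  moreover have "finite S" "S \<subseteq> V" using fin by (auto simp: S_def)
  ultimately show "psi V Rs F \<in> S" "\<forall>x\<in>S. (psi V Rs F, x) \<in> Rs!(d-1)"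
    using min_props[OF lL _ Sne] by auto
qed


theorem lemma3:
  fixes V :: "'a set" and Rs :: "('a \<times> 'a) set list" and d :: nat
  assumes "finite V"
    and "d \<ge> 1" and "length Rs = d"
    and "\<forall>i < d. linear_order_on V (Rs ! i)"
  defines "R' \<equiv> take (d - 1) Rs"
  defines "A \<equiv> {F \<in> supremum_section V Rs - supremum_section V R'. psi V Rs F \<notin> F}"
  defines "B \<equiv> {F \<in> supremum_section V Rs - supremum_section V R'. psi V Rs F \<in> F}"
  shows "(\<forall>F\<in>A. F \<union> {psi V Rs F} \<in> B
              \<and> psi V Rs (F \<union> {psi V Rs F}) = psi V Rs F
              \<and> (\<forall>f\<in>F. strict_in (Rs ! (d - 1)) f (psi V Rs F)))
       \<and> (\<forall>F\<in>B. F - {psi V Rs F} \<in> A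
              \<and> psi V Rs (F - {psi V Rs F}) = psi V Rs F)"
proof (intro conjI ballI)
  note fin = assms(1) and d1 = assms(2) and len = assms(3) and lin = assms(4)
  let ?S = "\<lambda>F. {x\<in>V. \<forall>i<d-1. strict_in (Rs!i) x (max_in (Rs!i) F)}"
  fix F assume "F \<in> A"
  hence FS: "F \<in> supremum_section V Rs" and FnS: "F \<notin> supremum_section V (take (d-1) Rs)"
    and pF: "psi V Rs F \<notin> F" by (auto simp: A_def R'_def)
  note c = core[OF fin len d1 lin FS FnS]
  define p where "p = psi V Rs F"
  define G where "G = F \<union> {p}"
  have pS: "p \<in> ?S F" using c(7) p_def by simp
  hence pV: "p \<in> V" by simp
  have mG: "max_in (Rs!i) G = max_in (Rs!i) F" if i: "i < d - 1" for i
  proof -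
    have l: "linear_order_on V (Rs!i)" using lin i by auto
    show ?thesis
      using max_eq[OF l, of "max_in (Rs!i) F" G] c(4)[OF i] pS i by (auto simp: G_def strict_in_def)
  qed
  have psiG: "psi V Rs G = p" unfolding p_def by (rule psi_cong) (use mG len in auto)
  show "psi V Rs (F \<union> {psi V Rs F}) = psi V Rs F" using psiG by (simp add: G_def p_def)
  have GS: "G \<in> supremum_section V Rs"
    unfolding supremum_section_def
  proof (intro CollectI conjI ballI)
    show "G \<subseteq> V" using c(1) pV by (auto simp: G_def)
    fix v assume vV: "v \<in> V"
    show "dominates_rep Rs v G"
    proof (cases "v \<in> ?S F")
      case True
      have "dominates_in (Rs!(d-1)) v G"
        using c(6) c(8) True by (auto simp: dominates_in_def G_def p_def)
      thus ?thesis using d1 len by (auto simp: dom_full intro!: exI[of _ "d-1"])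
    next
      case False
      then obtain i where i: "i < d - 1" and ns: "\<not> strict_in (Rs!i) v (max_in (Rs!i) F)"
        using vV by auto
      have l: "linear_order_on V (Rs!i)" using lin i by auto
      have mV: "max_in (Rs!i) F \<in> V" using c(4)[OF i] c(1) by auto
      have mv: "(max_in (Rs!i) F, v) \<in> Rs!i"
        using ns lin_total[OF l vV mV] lin_refl[OF l vV] by (auto simp: strict_in_def)
      have "dominates_in (Rs!i) v G"
        unfolding dominates_in_def
      proof
        fix g assume "g \<in> G"
        moreover have "(p, max_in (Rs!i) F) \<in> Rs!i" using pS i by (simp add: strict_in_def)
        ultimately show "(g,v) \<in> Rs!i" using c(4)[OF i] lin_trans[OF l _ mv] by (auto simp: G_def)
      qed
      thus ?thesis using i len by (auto simp: dom_full intro!: exI[of _ i])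
    qed
  qed
  have GnS: "G \<notin> supremum_section V (take (d-1) Rs)"
  proof
    assume "G \<in> supremum_section V (take (d-1) Rs)"
    then obtain i where i: "i < d - 1" and dm: "dominates_in (Rs!i) p G"
      using pV len by (auto simp: supremum_section_def dom_take)
    have l: "linear_order_on V (Rs!i)" using lin i by auto
    have "(max_in (Rs!i) F, p) \<in> Rs!i" using dm c(4)[OF i] by (auto simp: dominates_in_def G_def)
    thus False using pS i lin_antisym[OF l] by (auto simp: strict_in_def)
  qed
  show "F \<union> {psi V Rs F} \<in> B"
    using GS GnS psiG by (auto simp: B_def R'_def G_def p_def)
  fix f assume "f \<in> F"
  thus "strict_in (Rs ! (d - 1)) f (psi V Rs F)"
    using c(6) c(7) pF by (auto simp: strict_in_def)
next
  note fin = assms(1) and d1 = assms(2) and len = assms(3) and lin = assms(4)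
  let ?S = "\<lambda>F. {x\<in>V. \<forall>i<d-1. strict_in (Rs!i) x (max_in (Rs!i) F)}"
  fix F assume "F \<in> B"
  hence FS: "F \<in> supremum_section V Rs" and FnS: "F \<notin> supremum_section V (take (d-1) Rs)"
    and pF: "psi V Rs F \<in> F" by (auto simp: B_def R'_def)
  note c = core[OF fin len d1 lin FS FnS]
  define p where "p = psi V Rs F"
  define H where "H = F - {p}"
  have pS: "p \<in> ?S F" using c(7) p_def by simp
  have mH: "max_in (Rs!i) H = max_in (Rs!i) F" if i: "i < d - 1" for i
  proof -
    have l: "linear_order_on V (Rs!i)" using lin i by auto
    have "max_in (Rs!i) F \<noteq> p" using pS i by (auto simp: strict_in_def)
    thus ?thesis
      using max_eq[OF l, of "max_in (Rs!i) F" H] c(4)[OF i] by (auto simp: H_def)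
  qed
  have psiH: "psi V Rs H = p" unfolding p_def by (rule psi_cong) (use mH len in auto)
  show "psi V Rs (F - {psi V Rs F}) = psi V Rs F" using psiH by (simp add: H_def p_def)
  have HS: "H \<in> supremum_section V Rs"
    using FS unfolding supremum_section_def dominates_rep_def dominates_in_def H_def by blast
  obtain v where vS: "v \<in> ?S F" using c(5) by auto
  have HnS: "H \<notin> supremum_section V (take (d-1) Rs)"
  proof
    assume "H \<in> supremum_section V (take (d-1) Rs)"
    then obtain i where i: "i < d - 1" and dm: "dominates_in (Rs!i) v H"
      using vS len by (auto simp: supremum_section_def dom_take)
    have l: "linear_order_on V (Rs!i)" using lin i by auto
    have "max_in (Rs!i) H \<in> H" using mH[OF i] c(4)[OF i] pS i by (auto simp: H_def strict_in_def)
    hence "(max_in (Rs!i) F, v) \<in> Rs!i" using dm mH[OF i] by (auto simp: dominates_in_def)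
    thus False using vS i lin_antisym[OF l] by (auto simp: strict_in_def)
  qed
  show "F - {psi V Rs F} \<in> A"
    using HS HnS psiH by (auto simp: A_def R'_def H_def p_def)
qed

end
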